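(* Let $m_{-1}<m_1$ and $n_1<n_{-1}$ be real. For $(a,b)\in[0,\infty)^2$ let $F_+(a,b)=\frac{a}{a+b}m_1+\frac{b}{a+b}m_{-1}-a$ and $F_-(a,b)=\frac{b}{a+b}n_{-1}+\frac{a}{a+b}n_1-b$ (with the convention $0/0=1/2$). There is a unique $(a,b)\in[0,\infty)^2$ such that $a$ is a global maximizer of $a'\mapsto F_+(a',b)$ over $[0,\infty)$ and $b$ is a global maximizer of $b'\mapsto F_-(a,b')$ over $[0,\infty)$. It is $(a,b)=\Big(\frac{M^2N}{(M+N)^2},\frac{MN^2}{(M+N)^2}\Big)$ with $M=m_1-m_{-1}$, $N=n_{-1}-n_1$; in particular $a,b>0$. *)

theory Defs
  imports Complex_Main
begin

definition wfrac :: "real \<Rightarrow> real \<Rightarrow> real" where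
  "wfrac a b = (if a + b = 0 then 1/2 else a / (a + b))"

definition Fplus :: "real \<Rightarrow> real \<Rightarrow> real \<Rightarrow> real \<Rightarrow> real" where
  "Fplus m1 mm1 a b = wfrac a b * m1 + wfrac b a * mm1 - a"

definition Fminus :: "real \<Rightarrow> real \<Rightarrow> real \<Rightarrow> real \<Rightarrow> real" where
  "Fminus n1 nm1 a b = wfrac b a * nm1 + wfrac a b * n1 - b"

end

theory Submission
  imports Defs
begin

lemma Fplus_eq: assumes "a + b \<noteq> 0" shows "Fplus m1 mm1 a b = mm1 + (m1-mm1)*a/(a+b) - a"
proof -
  have "wfrac a b = a/(a+b)" "wfrac b a = b/(a+b)" using assms unfolding wfrac_def by (auto simp: add.commute)
  moreover have "a/(a+b)*m1 + b/(a+b)*mm1 = mm1 + (m1-mm1)*a/(a+b)"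
  proof -
    have "mm1 + (m1-mm1)*a/(a+b) = (mm1*(a+b) + (m1-mm1)*a)/(a+b)" using assms by (simp add: add_divide_eq_iff)
    also have "\<dots> = (a*m1 + b*mm1)/(a+b)" by (simp add: algebra_simps)
    also have "\<dots> = a/(a+b)*m1 + b/(a+b)*mm1" by (simp add: add_divide_distrib)
    finally show ?thesis by simp
  qed
  ultimately show ?thesis unfolding Fplus_def by simp
qed

lemma Fminus_eq: assumes "a + b \<noteq> 0" shows "Fminus n1 nm1 a b = n1 + (nm1-n1)*b/(b+a) - b"
proof -
  have h: "b + a \<noteq> 0" using assms by (simp add: add.commute)
  have "wfrac a b = a/(b+a)" "wfrac b a = b/(b+a)" using assms unfolding wfrac_def by (auto simp: add.commute)
  moreover have "b/(b+a)*nm1 + a/(b+a)*n1 = n1 + (nm1-n1)*b/(b+a)"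
  proof -
    have "n1 + (nm1-n1)*b/(b+a) = (n1*(b+a) + (nm1-n1)*b)/(b+a)" using h by (simp add: add_divide_eq_iff)
    also have "\<dots> = (b*nm1 + a*n1)/(b+a)" by (simp add: algebra_simps)
    also have "\<dots> = b/(b+a)*nm1 + a/(b+a)*n1" by (simp add: add_divide_distrib)
    finally show ?thesis by simp
  qed
  ultimately show ?thesis unfolding Fminus_def by simp
qed

lemma g_diff:
  fixes M b x y :: real
  assumes "x + b > 0" "y + b > 0"
  shows "(M*x/(x+b) - x) - (M*y/(y+b) - y) = (x - y) * (M*b/((x+b)*(y+b)) - 1)"
proof -
  have "M*x/(x+b) - M*y/(y+b) = M*b*(x-y)/((x+b)*(y+b))" using assms
    by (simp add: frac_eq_eq diff_frac_eq) (simp add: algebra_simps)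
  thus ?thesis by (simp add: algebra_simps)
qed

lemma opt_suff:
  fixes M b a a' :: real
  assumes "b > 0" "a \<ge> 0" "(a+b)^2 = M*b" "a' \<ge> 0"
  shows "M*a'/(a'+b) - a' \<le> M*a/(a+b) - a"
proof -
  have s: "a + b > 0" "a' + b > 0" using assms by auto
  have "(M*a/(a+b) - a) - (M*a'/(a'+b) - a') = (a - a') * (M*b/((a+b)*(a'+b)) - 1)"
    using g_diff[OF s] by simp
  also have "M*b/((a+b)*(a'+b)) = (a+b)/(a'+b)"
  proof -
    have "M*b/((a+b)*(a'+b)) = (a+b)*(a+b)/((a+b)*(a'+b))" using assms(3) by (simp add: power2_eq_square)
    also have "\<dots> = (a+b)/(a'+b)" using s by simp
    finally show ?thesis .
  qed
  also have "(a - a') * ((a+b)/(a'+b) - 1) = (a-a')^2/(a'+b)"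
    using s by (simp add: field_simps power2_eq_square)
  also have "\<dots> \<ge> 0" using s by simp
  finally show ?thesis by simp
qed

lemma opt_char:
  fixes M b a :: real
  assumes "b > 0" "a > 0"
    and opt: "\<forall>a'\<ge>0. M*a'/(a'+b) - a' \<le> M*a/(a+b) - a"
  shows "(a+b)^2 = M*b"
proof -
  have s: "a + b > 0" "0 + b > 0" using assms by auto
  have o0: "M*0/(0+b) - 0 \<le> M*a/(a+b) - a" using opt by blast
  have "0 \<le> (M*a/(a+b) - a) - (M*0/(0+b) - 0)" using o0 by linarith
  also have "\<dots> = (a - 0) * (M*b/((a+b)*(0+b)) - 1)" using g_diff[OF s] by simp
  finally have "M*b/((a+b)*b) \<ge> 1" using assms(2)
    by (simp add: zero_le_mult_iff)
  hence "(a+b)*b \<le> M*b" using s assms by (simp add: le_divide_eq)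
  hence Mge: "M \<ge> a + b" using assms by simp
  define c where "c = sqrt (M*b)"
  have Mb: "M*b \<ge> 0" using Mge assms by simp
  have c2: "c^2 = M*b" using Mb c_def by simp
  have cpos: "c > 0" using c_def Mge assms by simp
  have "b*b \<le> M*b" using Mge assms by (intro mult_right_mono) auto
  hence "b^2 \<le> c^2" using c2 by (simp add: power2_eq_square)
  hence cb: "b \<le> c" using cpos power2_le_imp_le[of b c] by linarith
  define a' where "a' = c - b"
  have a'0: "a' \<ge> 0" using cb a'_def by simp
  have s2: "a' + b > 0" using cpos a'_def by simp
  have "(M*a'/(a'+b) - a') - (M*a/(a+b) - a) = (a' - a) * (M*b/((a'+b)*(a+b)) - 1)"
    using g_diff[OF s2 s(1)] by simp
  also have "M*b/((a'+b)*(a+b)) = c/(a+b)"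
  proof -
    have h1: "a'+b = c" using a'_def by simp
    have h2: "M*b = c*c" using c2 by (simp add: power2_eq_square)
    have "M*b/((a'+b)*(a+b)) = c*c/(c*(a+b))" by (simp only: h1 h2)
    also have "\<dots> = c/(a+b)" using cpos by simp
    finally show ?thesis .
  qed
  also have "(a' - a) * (c/(a+b) - 1) = (c - (a+b))^2/(a+b)"
  proof -
    have "c/(a+b) - 1 = (c - (a+b))/(a+b)" using s by (simp add: diff_divide_distrib)
    moreover have "a' - a = c - (a+b)" using a'_def by simp
    ultimately show ?thesis by (simp add: power2_eq_square)
  qed
  finally have eq: "(M*a'/(a'+b) - a') - (M*a/(a+b) - a) = (c - (a+b))^2/(a+b)" .
  have "M*a'/(a'+b) - a' \<le> M*a/(a+b) - a" using opt a'0 by blast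
  hence "(c - (a+b))^2/(a+b) \<le> 0" using eq by linarith
  hence "(c - (a+b))^2 \<le> 0" using s by (simp add: divide_le_0_iff)
  hence "c = a + b" by simp
  thus ?thesis using c2 by simp
qed

theorem mainTheorem13:
  fixes m1 mm1 n1 nm1 :: real
  assumes "mm1 < m1" and "n1 < nm1"
  defines "M \<equiv> m1 - mm1" and "N \<equiv> nm1 - n1"
  shows "{(a, b). a \<ge> 0 \<and> b \<ge> 0
            \<and> (\<forall>a'\<ge>0. Fplus m1 mm1 a' b \<le> Fplus m1 mm1 a b)
            \<and> (\<forall>b'\<ge>0. Fminus n1 nm1 a b' \<le> Fminus n1 nm1 a b)}
         = {(M\<^sup>2 * N / (M + N)\<^sup>2, M * N\<^sup>2 / (M + N)\<^sup>2)}
       \<and> M\<^sup>2 * N / (M + N)\<^sup>2 > 0 \<and> M * N\<^sup>2 / (M + N)\<^sup>2 > 0"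
proof -
  have M0: "M > 0" and N0: "N > 0" using assms by auto
  define a0 where "a0 = M\<^sup>2 * N / (M + N)\<^sup>2"
  define b0 where "b0 = M * N\<^sup>2 / (M + N)\<^sup>2"
  have a0p: "a0 > 0" and b0p: "b0 > 0" using M0 N0 a0_def b0_def by auto
  have s0: "a0 + b0 = M*N/(M+N)"
  proof -
    have p: "M + N > 0" using M0 N0 by simp
    have "a0 + b0 = (M\<^sup>2 * N + M * N\<^sup>2) / (M + N)\<^sup>2"
      unfolding a0_def b0_def by (simp only: add_divide_distrib)
    also have "M\<^sup>2 * N + M * N\<^sup>2 = (M*N)*(M+N)" by (simp add: power2_eq_square algebra_simps)
    also have "(M + N)\<^sup>2 = (M+N)*(M+N)" by (simp add: power2_eq_square)
    also have "(M*N)*(M+N)/((M+N)*(M+N)) = M*N/(M+N)" using p by simp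
    finally show ?thesis .
  qed
  have q1: "(M*N/(M+N))^2 = M*b0" unfolding b0_def using M0 N0
    by (simp add: power_divide power_mult_distrib power2_eq_square)
  have q2: "(M*N/(M+N))^2 = N*a0" unfolding a0_def using M0 N0
    by (simp add: power_divide power_mult_distrib power2_eq_square)
  have e1: "(a0+b0)^2 = M*b0" using s0 q1 by simp
  have e2: "(b0+a0)^2 = N*a0" using s0 q2 by (simp add: add.commute)
  let ?S = "{(a, b). a \<ge> 0 \<and> b \<ge> 0
            \<and> (\<forall>a'\<ge>0. Fplus m1 mm1 a' b \<le> Fplus m1 mm1 a b)
            \<and> (\<forall>b'\<ge>0. Fminus n1 nm1 a b' \<le> Fminus n1 nm1 a b)}"
  have sub: "(a,b) \<in> ?S \<Longrightarrow> a = a0 \<and> b = b0" for a b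
  proof -
    assume "(a,b) \<in> ?S"
    hence a: "a \<ge> 0" "b \<ge> 0" and o1: "\<forall>a'\<ge>0. Fplus m1 mm1 a' b \<le> Fplus m1 mm1 a b"
      and o2: "\<forall>b'\<ge>0. Fminus n1 nm1 a b' \<le> Fminus n1 nm1 a b" by auto
    have bp: "b > 0"
    proof (rule ccontr)
      assume "\<not> b > 0" hence b0': "b = 0" using a by simp
      show False
      proof (cases "a = 0")
        case True
        have "Fplus m1 mm1 (M/4) 0 \<le> Fplus m1 mm1 0 0" using o1 M0 b0' True by simp
        hence "m1 - M/4 \<le> m1/2 + mm1/2" using M0 unfolding Fplus_def wfrac_def by simp
        thus False using assms(1) unfolding M_def by (simp add: field_simps)
      next
        case False
        hence "a > 0" using a by simp
        moreover have "Fplus m1 mm1 (a/2) 0 \<le> Fplus m1 mm1 a 0" using o1 a b0' by simp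
        ultimately show False unfolding Fplus_def wfrac_def by simp
      qed
    qed
    have ap: "a > 0"
    proof (rule ccontr)
      assume "\<not> a > 0" hence a0': "a = 0" using a by simp
      have "Fminus n1 nm1 0 (b/2) \<le> Fminus n1 nm1 0 b" using o2 a a0' by simp
      thus False using bp unfolding Fminus_def wfrac_def by simp
    qed
    have o1': "\<forall>a'\<ge>0. M*a'/(a'+b) - a' \<le> M*a/(a+b) - a"
    proof (intro allI impI)
      fix a' :: real assume "a' \<ge> 0"
      hence "Fplus m1 mm1 a' b \<le> Fplus m1 mm1 a b" using o1 by simp
      thus "M*a'/(a'+b) - a' \<le> M*a/(a+b) - a"
        using Fplus_eq[of a' b m1 mm1] Fplus_eq[of a b m1 mm1] \<open>a' \<ge> 0\<close> ap bp M_def by simp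
    qed
    have o2': "\<forall>b'\<ge>0. N*b'/(b'+a) - b' \<le> N*b/(b+a) - b"
    proof (intro allI impI)
      fix b' :: real assume "b' \<ge> 0"
      hence "Fminus n1 nm1 a b' \<le> Fminus n1 nm1 a b" using o2 by simp
      thus "N*b'/(b'+a) - b' \<le> N*b/(b+a) - b"
        using Fminus_eq[of a b' n1 nm1] Fminus_eq[of a b n1 nm1] \<open>b' \<ge> 0\<close> ap bp N_def by simp
    qed
    have E1: "(a+b)^2 = M*b" using opt_char[OF bp ap o1'] .
    have E2: "(a+b)^2 = N*a" using opt_char[OF ap bp o2'] by (simp add: add.commute)
    have bb: "b = N*a/M" using E1 E2 M0 by (simp add: field_simps)
    have "(a*(M+N)/M)^2 = N*a" using E2 bb M0 by (simp add: field_simps power2_eq_square)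
    hence "a*(a*(M+N)^2) = a*(N*M^2)" using M0 by (simp add: field_simps power2_eq_square)
    hence "a*(M+N)^2 = N*M^2" using ap by simp
    hence aa: "a = a0" unfolding a0_def using M0 N0 by (simp add: field_simps)
    have "(M+N)^2 > 0" using M0 N0 by simp
    hence "N*(M\<^sup>2 * N / (M + N)\<^sup>2)/M = M * N\<^sup>2 / (M + N)\<^sup>2" using M0 N0
      by (simp add: field_simps power2_eq_square[of M] power2_eq_square[of N])
    hence "N*a0/M = b0" unfolding a0_def b0_def .
    hence "b = b0" using bb aa by simp
    thus ?thesis using aa by simp
  qed
  have mem: "(a0,b0) \<in> ?S"
  proof -
    have "\<forall>a'\<ge>0. Fplus m1 mm1 a' b0 \<le> Fplus m1 mm1 a0 b0"
    proof (intro allI impI)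
      fix a' :: real assume h: "a' \<ge> 0"
      have "M*a'/(a'+b0) - a' \<le> M*a0/(a0+b0) - a0" using opt_suff[OF b0p _ e1 h] a0p by simp
      thus "Fplus m1 mm1 a' b0 \<le> Fplus m1 mm1 a0 b0"
        using Fplus_eq[of a' b0 m1 mm1] Fplus_eq[of a0 b0 m1 mm1] h a0p b0p M_def by simp
    qed
    moreover have "\<forall>b'\<ge>0. Fminus n1 nm1 a0 b' \<le> Fminus n1 nm1 a0 b0"
    proof (intro allI impI)
      fix b' :: real assume h: "b' \<ge> 0"
      have "N*b'/(b'+a0) - b' \<le> N*b0/(b0+a0) - b0" using opt_suff[OF a0p _ e2 h] b0p by simp
      thus "Fminus n1 nm1 a0 b' \<le> Fminus n1 nm1 a0 b0"
        using Fminus_eq[of a0 b' n1 nm1] Fminus_eq[of a0 b0 n1 nm1] h a0p b0p N_def by simp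
    qed
    ultimately show ?thesis using a0p b0p by simp
  qed
  have S: "?S = {(a0,b0)}"
  proof (intro equalityI subsetI)
    fix x assume h: "x \<in> ?S"
    have "(fst x, snd x) \<in> ?S" using h by (simp only: prod.collapse)
    hence "fst x = a0 \<and> snd x = b0" by (rule sub)
    thus "x \<in> {(a0,b0)}" by (simp add: prod_eq_iff)
  next
    fix x assume "x \<in> {(a0,b0)}"
    hence "x = (a0,b0)" by simp
    thus "x \<in> ?S" using mem by (simp only:)
  qed
  have S': "?S = {(M\<^sup>2 * N / (M + N)\<^sup>2, M * N\<^sup>2 / (M + N)\<^sup>2)}"
    using S unfolding a0_def b0_def .
  have a0p': "M\<^sup>2 * N / (M + N)\<^sup>2 > 0" using a0p unfolding a0_def .
  have b0p': "M * N\<^sup>2 / (M + N)\<^sup>2 > 0" using b0p unfolding b0_def .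
  show ?thesis by (intro conjI S' a0p' b0p')
qed

end
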